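(* Let $G$ be a periodic group such that the set of primes dividing the orders of elements of $G$ is exactly $\{2,3\}$, for any two elements $g,h\in G$ of orders at most $4$ the order of $gh$ is at most $9$, and the centralizer of every involution of $G$ is a locally cyclic $2$-group. Let $x\in G$ have order $3$ and $a\in G$ have order $2$ with $a^{-1}xa=x^{-1}$. Then $C_G(x)$ is an abelian $3$-group of exponent at most $9$, and $a$ acts on $C_G(x)$ by inversion (i.e. $a^{-1}ca=c^{-1}$ for all $c\in C_G(x)$). *)

theory Defs
  imports "HOL-Algebra.Algebra" "HOL-Computational_Algebra.Primes"
begin

definition centralizer_elem :: "('a, 'b) monoid_scheme \<Rightarrow> 'a \<Rightarrow> 'a set" where
  "centralizer_elem G x = {c \<in> carrier G. c \<otimes>\<^bsub>G\<^esub> x = x \<otimes>\<^bsub>G\<^esub> c}"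

text \<open>Periodic group: every element has finite order (group.ord is 0 for elements of infinite order).\<close>
definition periodic_group :: "('a, 'b) monoid_scheme \<Rightarrow> bool" where
  "periodic_group G \<longleftrightarrow> group G \<and> (\<forall>g \<in> carrier G. group.ord G g \<noteq> 0)"

definition is_p_subgroup :: "('a, 'b) monoid_scheme \<Rightarrow> nat \<Rightarrow> 'a set \<Rightarrow> bool" where
  "is_p_subgroup G p H \<longleftrightarrow> subgroup H G \<and> (\<forall>h \<in> H. \<exists>k::nat. group.ord G h = p ^ k)"

definition locally_cyclic :: "('a, 'b) monoid_scheme \<Rightarrow> 'a set \<Rightarrow> bool" where
  "locally_cyclic G H \<longleftrightarrow> subgroup H G \<and>
     (\<forall>F. F \<subseteq> H \<and> finite F \<longrightarrow> (\<exists>c \<in> H. generate G F = generate G {c}))"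

definition abelian_subset :: "('a, 'b) monoid_scheme \<Rightarrow> 'a set \<Rightarrow> bool" where
  "abelian_subset G H \<longleftrightarrow> (\<forall>c \<in> H. \<forall>d \<in> H. c \<otimes>\<^bsub>G\<^esub> d = d \<otimes>\<^bsub>G\<^esub> c)"

text \<open>Exponent of a periodic subgroup H at most n: the least common multiple of the element orders
  is positive and at most n.\<close>
definition exponent_le :: "('a, 'b) monoid_scheme \<Rightarrow> 'a set \<Rightarrow> nat \<Rightarrow> bool" where
  "exponent_le G H n \<longleftrightarrow> (\<exists>e. 0 < e \<and> e \<le> n \<and> (\<forall>h \<in> H. h [^]\<^bsub>G\<^esub> e = \<one>\<^bsub>G\<^esub>))"

end

theory Submission
  imports Defs
begin

lemma pow3_aux:
  fixes n :: nat
  assumes "n > 0" "\<And>p. Factorial_Ring.prime p \<Longrightarrow> p dvd n \<Longrightarrow> p = 3"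
  shows "\<exists>k. n = 3^k"
  using assms
proof (induction n rule: less_induct)
  case (less n)
  show ?case
  proof (cases "n = 1")
    case True then show ?thesis by (auto intro: exI[of _ 0])
  next
    case False
    then obtain p where p: "Factorial_Ring.prime p" "p dvd n" using prime_factor_nat by blast
    then have "p = 3" using less by blast
    then obtain m where m: "n = 3*m" using p by auto
    have "m < n" "m > 0" using m less.prems by auto
    moreover have "\<And>q. Factorial_Ring.prime q \<Longrightarrow> q dvd m \<Longrightarrow> q = 3" using less.prems m by auto
    ultimately obtain k where "m = 3^k" using less.IH by blast
    then show ?thesis using m by (metis power_Suc)
  qed
qed

lemma pow32: "(3::nat)^k = 2^m \<Longrightarrow> (3::nat)^k = 1"
proof (cases m)
  case (Suc m')
  assume h: "(3::nat)^k = 2^m"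
  have "even ((2::nat)^m)" using Suc by simp
  moreover have "odd ((3::nat)^k)" by simp
  ultimately show ?thesis using h by simp
qed simp

lemma (in group) comm_pow:
  assumes "c \<in> carrier G" "x \<in> carrier G" "c \<otimes> x = x \<otimes> c"
  shows "c [^] (k::nat) \<otimes> x = x \<otimes> c [^] k"
proof (induction k)
  case 0 then show ?case using assms by simp
next
  case (Suc k)
  have "c [^] Suc k \<otimes> x = c [^] k \<otimes> (c \<otimes> x)" using assms by (simp add: m_assoc)
  also have "\<dots> = (c [^] k \<otimes> x) \<otimes> c" using assms by (simp add: m_assoc)
  also have "\<dots> = x \<otimes> c [^] Suc k" using Suc assms by (simp add: m_assoc)
  finally show ?case .
qed

lemma (in group) comm_inv:
  assumes "c \<in> carrier G" "x \<in> carrier G" "c \<otimes> x = x \<otimes> c"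
  shows "inv c \<otimes> x = x \<otimes> inv c"
proof -
  have 1: "c \<otimes> (inv c \<otimes> x) = x" using assms by (simp add: m_assoc[symmetric])
  have "c \<otimes> (x \<otimes> inv c) = (c \<otimes> x) \<otimes> inv c" using assms(1,2) by (simp add: m_assoc)
  also have "\<dots> = (x \<otimes> c) \<otimes> inv c" using assms by simp
  also have "\<dots> = x" using assms(1,2) by (simp add: m_assoc)
  finally have "c \<otimes> (inv c \<otimes> x) = c \<otimes> (x \<otimes> inv c)" using 1 by simp
  then show ?thesis using assms by simp
qed

lemma (in group) ord2:
  assumes "i \<in> carrier G" "i \<otimes> i = \<one>" "i \<noteq> \<one>"
  shows "ord i = 2"
proof -
  have "i [^] (2::nat) = \<one>" using assms by (simp add: numeral_2_eq_2)
  then have "ord i dvd 2" using pow_eq_id assms by blast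
  moreover have "ord i \<noteq> 1" using ord_eq_1 assms by blast
  ultimately show ?thesis using dvd_antisym by (metis dvd_0_left_iff nat_dvd_not_less two_is_prime_nat prime_nat_iff zero_neq_numeral)
qed

theorem lemma3:
  fixes G (structure) and x a
  assumes per: "periodic_group G"
    and primes: "{p::nat. Factorial_Ring.prime p \<and> (\<exists>g \<in> carrier G. p dvd group.ord G g)} = {2, 3}"
    and prod9: "\<And>g h. g \<in> carrier G \<Longrightarrow> h \<in> carrier G \<Longrightarrow> group.ord G g \<le> 4 \<Longrightarrow>
                  group.ord G h \<le> 4 \<Longrightarrow> group.ord G (g \<otimes> h) \<le> 9"
    and invol: "\<And>i. i \<in> carrier G \<Longrightarrow> group.ord G i = 2 \<Longrightarrow>
                  locally_cyclic G (centralizer_elem G i) \<and> is_p_subgroup G 2 (centralizer_elem G i)"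
    and x: "x \<in> carrier G" "group.ord G x = 3"
    and a: "a \<in> carrier G" "group.ord G a = 2"
    and ax: "inv a \<otimes> x \<otimes> a = inv x"
  shows "abelian_subset G (centralizer_elem G x) \<and> is_p_subgroup G 3 (centralizer_elem G x)
         \<and> exponent_le G (centralizer_elem G x) 9
         \<and> (\<forall>c \<in> centralizer_elem G x. inv a \<otimes> c \<otimes> a = inv c)"
proof -
  interpret group G using per unfolding periodic_group_def by blast
  define C where "C = centralizer_elem G x"
  have Cmem: "c \<in> C \<longleftrightarrow> c \<in> carrier G \<and> c \<otimes> x = x \<otimes> c" for c
    unfolding C_def centralizer_elem_def by blast
  have two: "\<exists>m. ord y = 2^m" if "i \<in> carrier G" "ord i = 2" "y \<in> carrier G" "y \<otimes> i = i \<otimes> y" for i y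
    using invol[OF that(1,2)] that(3,4) unfolding is_p_subgroup_def centralizer_elem_def by blast
  have ordpos: "ord g > 0" if "g \<in> carrier G" for g
    using per that unfolding periodic_group_def by blast
  have Cpow: "c [^] (k::nat) \<in> C" if "c \<in> C" for c k
    using that comm_pow x(1) Cmem by auto
  have Cinv: "inv c \<in> C" if "c \<in> C" for c
    using that comm_inv x(1) Cmem by auto
  have Cmult: "c \<otimes> d \<in> C" if "c \<in> C" "d \<in> C" for c d
    using that x(1) Cmem by (metis m_assoc m_closed)
  have C3: "\<exists>k. ord c = 3^k" if "c \<in> C" for c
  proof -
    have cG: "c \<in> carrier G" "c \<otimes> x = x \<otimes> c" using that Cmem by auto
    have "p = 3" if pp: "Factorial_Ring.prime p" "p dvd ord c" for p
    proof -
      have "p \<in> {2,3}" using primes that cG by blast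
      moreover have "p \<noteq> 2"
      proof
        assume "p = 2"
        then obtain q where q: "ord c = 2 * q" using pp by blast
        have "q \<noteq> 0" using q ordpos[OF cG(1)] by auto
        have "ord (c [^] q) = ord c div q" using ord_pow cG q \<open>q \<noteq> 0\<close> by simp
        then have o2: "ord (c [^] q) = 2" using q \<open>q \<noteq> 0\<close> by simp
        have "x \<otimes> c [^] q = c [^] q \<otimes> x" using comm_pow cG x by simp
        then obtain m where "ord x = 2^m" using two[OF _ o2, of x] cG x by auto
        then have "(2::nat)^m = 3" using x by simp
        then show False using pow32[of 1 m] by simp
      qed
      ultimately show ?thesis by blast
    qed
    then show ?thesis using pow3_aux ordpos cG by blast
  qed
  have aa: "a \<otimes> a = \<one>"
  proof -
    have "a [^] (2::nat) = \<one>" using a pow_eq_id by simp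
    then show ?thesis using a by (simp add: numeral_2_eq_2)
  qed
  have aa2: "a \<otimes> (a \<otimes> r) = r" if "r \<in> carrier G" for r
    using aa a that by (simp add: m_assoc[symmetric])
  have inva: "inv a = a" using aa a by (simp add: inv_char)
  have aC: "a \<notin> C"
  proof
    assume "a \<in> C"
    then obtain k where "ord a = 3^k" using C3 by blast
    then have "(3::nat)^k = 2^1" using a by simp
    then show False using pow32 by fastforce
  qed
  have axa: "a \<otimes> x \<otimes> a = inv x" using ax inva by simp
  have ax1: "a \<otimes> (x \<otimes> r) = inv x \<otimes> (a \<otimes> r)" if "r \<in> carrier G" for r
  proof -
    have "inv x \<otimes> (a \<otimes> r) = a \<otimes> x \<otimes> a \<otimes> (a \<otimes> r)" using axa by simp
    also have "\<dots> = a \<otimes> x \<otimes> (a \<otimes> a) \<otimes> r" using a x that by (simp add: m_assoc)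
    also have "\<dots> = a \<otimes> (x \<otimes> r)" using a x that aa by (simp add: m_assoc)
    finally show ?thesis by simp
  qed
  have ax2: "a \<otimes> (inv x \<otimes> r) = x \<otimes> (a \<otimes> r)" if "r \<in> carrier G" for r
  proof -
    have "a \<otimes> (inv x \<otimes> r) = a \<otimes> (inv x \<otimes> (a \<otimes> (a \<otimes> r)))" using aa a that x by (simp add: m_assoc[symmetric])
    also have "\<dots> = a \<otimes> (a \<otimes> (x \<otimes> (a \<otimes> r)))" using ax1[of "a \<otimes> r"] a that by simp
    also have "\<dots> = x \<otimes> (a \<otimes> r)" using aa a that x by (simp add: m_assoc[symmetric])
    finally show ?thesis .
  qed
  have inv_act: "a \<otimes> c \<otimes> a = inv c" if cC: "c \<in> C" for c
  proof -
    have cG: "c \<in> carrier G" "c \<otimes> x = x \<otimes> c" using cC Cmem by auto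
    have cxi: "c \<otimes> inv x = inv x \<otimes> c" using comm_inv[of x c] cG x by simp
    define y where "y = a \<otimes> c"
    have yG: "y \<in> carrier G" using y_def a cG by simp
    define w where "w = y [^] (2::nat)"
    have w_eq: "w = a \<otimes> (c \<otimes> (a \<otimes> c))" using y_def w_def a cG by (simp add: numeral_2_eq_2 m_assoc)
    have wG: "w \<in> carrier G" using w_def yG by simp
    have "w \<otimes> x = x \<otimes> w"
    proof -
      have "w \<otimes> x = a \<otimes> (c \<otimes> (a \<otimes> (c \<otimes> x)))" using w_eq a cG x by (simp add: m_assoc)
      also have "\<dots> = a \<otimes> (c \<otimes> (a \<otimes> (x \<otimes> c)))" using cG by simp
      also have "\<dots> = a \<otimes> (c \<otimes> (inv x \<otimes> (a \<otimes> c)))" using ax1 cG by simp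
      also have "\<dots> = a \<otimes> (inv x \<otimes> (c \<otimes> (a \<otimes> c)))" using cxi a cG x by (simp add: m_assoc[symmetric])
      also have "\<dots> = x \<otimes> w" using ax2 a cG w_eq by simp
      finally show ?thesis .
    qed
    then have wC: "w \<in> C" using wG Cmem by simp
    then obtain k where k: "ord w = 3^k" using C3 by blast
    define n where "n = ord w"
    define i where "i = y [^] n"
    have iG: "i \<in> carrier G" using i_def yG by simp
    have "i \<otimes> i = y [^] (2 * n)" using i_def yG by (simp add: nat_pow_mult mult_2)
    also have "\<dots> = w [^] n" using w_def yG by (simp add: nat_pow_pow)
    also have "\<dots> = \<one>" using n_def wG by simp
    finally have ii: "i \<otimes> i = \<one>" .
    have i1: "i \<noteq> \<one>"
    proof
      assume i1: "i = \<one>"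
      have "odd n" using n_def k by simp
      then obtain j where j: "n = 2*j+1" by (metis oddE)
      have "y = y [^] n \<otimes> y" using i1 i_def yG by simp
      also have "\<dots> = y [^] (n+1)" using yG by (simp add: nat_pow_mult)
      also have "\<dots> = y [^] (2*(j+1))" using j by (simp add: algebra_simps)
      also have "\<dots> = w [^] (j+1)" by (simp only: w_def nat_pow_pow[OF yG])
      finally have "y \<in> C" using Cpow[OF wC, of "j+1"] by simp
      then have "y \<otimes> inv c \<in> C" using Cmult Cinv cC by simp
      moreover have "y \<otimes> inv c = a" using y_def a cG by (simp add: m_assoc)
      ultimately show False using aC by simp
    qed
    have oi: "ord i = 2" using ord2 iG ii i1 by simp
    have "w \<otimes> i = i \<otimes> w" using w_def i_def yG by (simp add: nat_pow_mult add.commute)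
    then obtain m where "ord w = 2^m" using two[OF iG oi wG] by blast
    then have "ord w = 1" using k pow32 by simp
    then have w1: "w = \<one>" using ord_eq_1 wG by simp
    then have "a \<otimes> c \<otimes> (a \<otimes> c) = \<one>" using w_eq a cG by (simp add: m_assoc)
    then have "a \<otimes> c \<otimes> a \<otimes> c = \<one>" using a cG by (simp add: m_assoc)
    then show ?thesis using inv_equality[of "a \<otimes> c \<otimes> a" c] a cG by simp
  qed
  have abel: "c \<otimes> d = d \<otimes> c" if cC: "c \<in> C" and dC: "d \<in> C" for c d
  proof -
    have cG: "c \<in> carrier G" and dG: "d \<in> carrier G" using cC dC Cmem by auto
    have "inv (c \<otimes> d) = a \<otimes> (c \<otimes> d) \<otimes> a" using inv_act Cmult cC dC by simp
    also have "\<dots> = (a \<otimes> c \<otimes> a) \<otimes> (a \<otimes> d \<otimes> a)" using aa2 a cG dG by (simp add: m_assoc)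
    also have "\<dots> = inv c \<otimes> inv d" using inv_act cC dC by simp
    also have "\<dots> = inv (d \<otimes> c)" using cG dG by (simp add: inv_mult_group)
    finally have "inv (c \<otimes> d) = inv (d \<otimes> c)" .
    then show ?thesis using cG dG by (metis inv_inv m_closed)
  qed
  have exp9: "c [^] (9::nat) = \<one>" if cC: "c \<in> C" for c
  proof -
    have cG: "c \<in> carrier G" using cC Cmem by auto
    have "a \<otimes> c \<otimes> a = inv c" using inv_act cC by simp
    moreover have "(a \<otimes> c) \<otimes> (a \<otimes> c) = (a \<otimes> c \<otimes> a) \<otimes> c" using a cG by (simp add: m_assoc)
    ultimately have "(a \<otimes> c) \<otimes> (a \<otimes> c) = \<one>" using cG by simp
    then have "(a \<otimes> c) [^] (2::nat) = \<one>" using a cG by (simp add: numeral_2_eq_2)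
    then have "ord (a \<otimes> c) dvd 2" using pow_eq_id a cG by (metis m_closed)
    then have "ord (a \<otimes> c) \<le> 2" by (rule dvd_imp_le) simp
    then have "ord (a \<otimes> c) \<le> 4" by simp
    then have "ord (a \<otimes> (a \<otimes> c)) \<le> 9" using prod9[of a "a \<otimes> c"] a cG by simp
    moreover have "a \<otimes> (a \<otimes> c) = c" using aa a cG by (simp add: m_assoc[symmetric])
    ultimately have o9: "ord c \<le> 9" by simp
    obtain k where k: "ord c = 3^k" using C3 cC by blast
    have "k \<le> 2"
    proof (rule ccontr)
      assume "\<not> k \<le> 2"
      then have "(3::nat)^3 \<le> 3^k" by (intro power_increasing) auto
      then show False using o9 k by simp
    qed
    then have "(3::nat)^k dvd 3^2" by (rule le_imp_power_dvd)
    then have "ord c dvd 9" using k by simp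
    then show ?thesis using pow_eq_id cG by simp
  qed
  have sub: "subgroup C G"
  proof (rule subgroupI)
    show "C \<subseteq> carrier G" using Cmem by auto
    show "C \<noteq> {}" using Cmem x by auto
  qed (use Cinv Cmult in auto)
  show ?thesis
    unfolding C_def[symmetric] abelian_subset_def is_p_subgroup_def exponent_le_def
    using abel sub C3 exp9 inv_act inva by (auto intro!: exI[of _ 9])
qed

end
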